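(* Suppose $f$ satisfies conditions (a)–(c) below with constants $L,M$, $h\ge0$ and $L(T^2+Th)\le\frac1{12}$. For $x,y\in\mathbb R^d$ let $\Phi_{x,y}:\mathbb R^d\to\mathbb R^d$ be a map with $\tilde q_{T,h}(x,v)=q_T(y,\Phi_{x,y}(v))$ for all $v$. Then for all $x,y,v\in\mathbb R^d$, \[ \|\Phi_{x,y}(v)-v\|\le\frac3{2T}\|x-y\|+2h^2\big(LT^{-1}\|x\|+L\|v\|+MT^{-1}\|x\|^2+MT\|v\|^2\big). \]
   Context: $f:\mathbb R^d\to\mathbb R$. Conditions: (a) $f$ has global minimum at $0$, $f(0)=0$; (b) $f\in C^2$, $\|\nabla^2f(x)\|_{op}\le L$ for all $x$; (c) $f\in C^3$, $\|\nabla^3f(x)\|_{op}\le M$ (operator norms of symmetric multilinear forms w.r.t. unit vectors). $q_t(x,v)$ is the time-$t$ position of the solution of $\dot x=v,\dot v=-\nabla f(x)$ from $(x,v)$. For $h>0$ with $T/h\in\mathbb N$ (always assumed), $\tilde q_{T,h}(x,v)=x_N$, $N=T/h$, where $x_0=x,v_0=v$, $x_{j+1}=x_j+hv_j-\frac{h^2}2\nabla f(x_j)$, $v_{j+1}=v_j-\frac h2(\nabla f(x_j)+\nabla f(x_{j+1}))$; $\tilde q_{T,0}=q_T$. *)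

theory Defs
  imports "HOL-Analysis.Analysis"
begin

text \<open>Solutions of the Hamiltonian ODE  x' = v, v' = - grad f (x), defined for all times,
  where g stands for the gradient of f.\<close>
definition ham_sol :: "('a::euclidean_space \<Rightarrow> 'a) \<Rightarrow> 'a \<Rightarrow> 'a \<Rightarrow> (real \<Rightarrow> 'a) \<Rightarrow> (real \<Rightarrow> 'a) \<Rightarrow> bool" where
  "ham_sol g x v X V \<longleftrightarrow> X 0 = x \<and> V 0 = v \<and>
     (\<forall>s. (X has_vector_derivative V s) (at s) \<and> (V has_vector_derivative - g (X s)) (at s))"

definition ham_q :: "('a::euclidean_space \<Rightarrow> 'a) \<Rightarrow> real \<Rightarrow> 'a \<Rightarrow> 'a \<Rightarrow> 'a" where
  "ham_q g t x v = (THE p. \<exists>X V. ham_sol g x v X V \<and> X t = p)"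

definition vv_step :: "('a::euclidean_space \<Rightarrow> 'a) \<Rightarrow> real \<Rightarrow> 'a \<times> 'a \<Rightarrow> 'a \<times> 'a" where
  "vv_step g h xv = (let x = fst xv; v = snd xv;
                         x' = x + h *\<^sub>R v - (h\<^sup>2 / 2) *\<^sub>R g x
                     in (x', v - (h / 2) *\<^sub>R (g x + g x')))"

definition vv_q :: "('a::euclidean_space \<Rightarrow> 'a) \<Rightarrow> real \<Rightarrow> real \<Rightarrow> 'a \<Rightarrow> 'a \<Rightarrow> 'a" where
  "vv_q g T h x v = (if h = 0 then ham_q g T x v
                     else fst ((vv_step g h ^^ nat (round (T / h))) (x, v)))"

end

theory Submission
  imports Defs "HOL-Analysis.Analysis"
begin

lemma growth:
  fixes f :: "real \<Rightarrow> 'b::real_inner"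
  assumes ab: "a \<le> b"
    and fd: "\<And>t. t \<in> {a..b} \<Longrightarrow> (f has_vector_derivative f' t) (at t)"
    and Gd: "\<And>t. t \<in> {a..b} \<Longrightarrow> (G has_real_derivative G' t) (at t)"
    and bd: "\<And>t. t \<in> {a..b} \<Longrightarrow> norm (f' t) \<le> G' t"
  shows "norm (f b - f a) \<le> G b - G a"
proof -
  define u where "u = f b - f a"
  define \<phi> where "\<phi> t = u \<bullet> f t - norm u * G t" for t
  have "\<phi> b \<le> \<phi> a"
  proof (rule DERIV_nonpos_imp_nonincreasing[OF ab])
    fix t assume t1: "a \<le> t" and t2: "t \<le> b"
    have t: "a \<le> t \<and> t \<le> b" using t1 t2 by simp
    have d1: "((\<lambda>t. u \<bullet> f t) has_real_derivative u \<bullet> f' t) (at t)"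
      using bounded_linear.has_vector_derivative[OF bounded_linear_inner_right fd[of t]] t
      by (auto simp: has_real_derivative_iff_has_vector_derivative)
    have "(\<phi> has_real_derivative u \<bullet> f' t - norm u * G' t) (at t)"
      unfolding \<phi>_def using d1 Gd[of t] t by (auto intro!: derivative_eq_intros)
    moreover have "u \<bullet> f' t - norm u * G' t \<le> 0"
    proof -
      have "u \<bullet> f' t \<le> norm u * norm (f' t)" by (rule norm_cauchy_schwarz)
      also have "\<dots> \<le> norm u * G' t" using bd[of t] t by (simp add: mult_left_mono)
      finally show ?thesis by simp
    qed
    ultimately show "\<exists>y. (\<phi> has_real_derivative y) (at t) \<and> y \<le> 0" by blast
  qed
  hence "u \<bullet> u \<le> norm u * (G b - G a)"
    unfolding \<phi>_def u_def by (simp add: inner_diff_right algebra_simps)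
  hence *: "norm u * norm u \<le> norm u * (G b - G a)"
    by (simp add: power2_eq_square[symmetric] power2_norm_eq_inner[symmetric])
  have "G a \<le> G b"
  proof (rule DERIV_nonneg_imp_nondecreasing[OF ab])
    fix t assume t1: "a \<le> t" and t2: "t \<le> b"
    have t: "a \<le> t \<and> t \<le> b" using t1 t2 by simp
    show "\<exists>y. (G has_real_derivative y) (at t) \<and> 0 \<le> y"
      using Gd[of t] bd[of t] t by (meson atLeastAtMost_iff norm_ge_zero order_trans)
  qed
  show ?thesis
  proof (cases "norm u = 0")
    case True then show ?thesis using \<open>G a \<le> G b\<close> u_def by simp
  next
    case False
    then have "norm u > 0" by simp
    with * show ?thesis unfolding u_def by (simp add: mult_le_cancel_left_pos)
  qed
qed

definition ivl :: "(real \<Rightarrow> 'b::banach) \<Rightarrow> real \<Rightarrow> 'b" where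
  "ivl G t = (if 0 \<le> t then integral {0..t} G else - integral {t..0} G)"

lemma ivl_deriv:
  fixes G :: "real \<Rightarrow> 'b::banach"
  assumes cont: "continuous_on UNIV G"
  shows "(ivl G has_vector_derivative G t) (at t)"
proof -
  define a where "a = min t 0 - 1"
  define b where "b = max t 0 + 1"
  have cab: "continuous_on {a..b} G" using cont continuous_on_subset by blast
  have intab: "G integrable_on {a..s}" for s
    using integrable_continuous_real[OF continuous_on_subset[OF cont]] by blast
  have eq: "integral {a..s} G - integral {a..0} G = ivl G s" if s: "s \<in> {a<..<b}" for s
  proof (cases "0 \<le> s")
    case True
    have "integral {a..0} G + integral {0..s} G = integral {a..s} G"
      by (rule Henstock_Kurzweil_Integration.integral_combine) (use True a_def s intab in auto)
    then show ?thesis using True by (auto simp: ivl_def algebra_simps)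
  next
    case False
    have "integral {a..s} G + integral {s..0} G = integral {a..0} G"
      by (rule Henstock_Kurzweil_Integration.integral_combine) (use False a_def s intab in auto)
    then show ?thesis using False by (auto simp: ivl_def algebra_simps)
  qed
  have tab: "t \<in> {a..b}" "t \<in> {a<..<b}" by (auto simp: a_def b_def)
  have "((\<lambda>s. integral {a..s} G - integral {a..0} G) has_vector_derivative G t) (at t within {a..b})"
    using has_vector_derivative_diff[OF integral_has_vector_derivative[OF cab tab(1)]
        has_vector_derivative_const[of "integral {a..0} G"]] by simp
  then have "((\<lambda>s. integral {a..s} G - integral {a..0} G) has_vector_derivative G t) (at t within {a<..<b})"
    by (rule has_vector_derivative_within_subset) auto
  then have "((\<lambda>s. integral {a..s} G - integral {a..0} G) has_vector_derivative G t) (at t)"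
    using has_vector_derivative_within_open[OF tab(2) open_greaterThanLessThan] by blast
  then show ?thesis
    by (rule has_vector_derivative_transform_within_open[OF _ _ tab(2)]) (use eq in auto)
qed

lemma ivl_0[simp]: "ivl G 0 = 0" by (simp add: ivl_def)

lemma exp_growth:
  fixes J :: "real \<Rightarrow> 'b::real_inner"
  assumes J0: "J 0 = 0" and Jd: "\<And>s. (J has_vector_derivative J' s) (at s)"
    and bd: "\<And>s. norm (J' s) \<le> B * exp (c * \<bar>s\<bar>)" and c: "c > 0" and B: "B \<ge> 0"
  shows "norm (J t) \<le> B / c * exp (c * \<bar>t\<bar>)"
proof (cases "0 \<le> t")
  case True
  have "norm (J t - J 0) \<le> B / c * exp (c * t) - B / c * exp (c * 0)"
  proof (rule growth[OF True Jd])
    fix s assume "s \<in> {0..t}"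
    show "((\<lambda>s. B / c * exp (c * s)) has_real_derivative B * exp (c * s)) (at s)"
      using c by (auto intro!: derivative_eq_intros)
    show "norm (J' s) \<le> B * exp (c * s)" using bd[of s] \<open>s \<in> {0..t}\<close> by simp
  qed
  moreover have "B / c \<ge> 0" using B c by simp
  ultimately show ?thesis using True J0 by simp
next
  case False
  have "norm (J 0 - J t) \<le> (- B / c * exp (- c * 0)) - (- B / c * exp (- c * t))"
  proof (rule growth[OF _ Jd])
    show "t \<le> 0" using False by simp
    fix s assume "s \<in> {t..0}"
    show "((\<lambda>s. - B / c * exp (- c * s)) has_real_derivative B * exp (- c * s)) (at s)"
      using c by (auto intro!: derivative_eq_intros)
    show "norm (J' s) \<le> B * exp (- c * s)" using bd[of s] \<open>s \<in> {t..0}\<close> by simp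
  qed
  moreover have "B / c \<ge> 0" using B c by simp
  ultimately show ?thesis using False J0 by (simp add: norm_minus_commute)
qed

lemma ode_exists:
  fixes F :: "'b::euclidean_space \<Rightarrow> 'b"
  assumes lip: "\<And>p q. norm (F p - F q) \<le> K * norm (p - q)" and F0: "F 0 = 0" and K: "K > 0"
  shows "\<exists>Y. Y 0 = z0 \<and> (\<forall>t. (Y has_vector_derivative F (Y t)) (at t))"
proof -
  define c where "c = 2 * K"
  have c: "c > 0" using K by (simp add: c_def)
  define w where "w t = exp (c * \<bar>t\<bar>)" for t
  have contF: "continuous_on UNIV F"
    by (rule lipschitz_on_continuous_on[of K]) (use K lip in \<open>auto simp: lipschitz_on_def dist_norm\<close>)
  have contw: "continuous_on UNIV w" unfolding w_def by (intro continuous_intros)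
  define Gz where "Gz Z s = F (w s *\<^sub>R apply_bcontfun Z s)" for Z :: "real \<Rightarrow>\<^sub>C 'b" and s
  have contG: "continuous_on UNIV (Gz Z)" for Z
    unfolding Gz_def
    by (rule continuous_on_compose2[OF contF]) (auto intro!: continuous_intros contw)
  have Gbd: "norm (Gz Z s) \<le> K * norm Z * exp (c * \<bar>s\<bar>)" for Z s
  proof -
    have "norm (Gz Z s) = norm (F (w s *\<^sub>R apply_bcontfun Z s) - F 0)" by (simp add: Gz_def F0)
    also have "\<dots> \<le> K * norm (w s *\<^sub>R apply_bcontfun Z s)" using lip[of _ 0] by (metis diff_zero)
    also have "\<dots> = K * w s * norm (apply_bcontfun Z s)" by (simp add: w_def)
    also have "\<dots> \<le> K * w s * norm Z"
      using K norm_bounded[of Z s] by (intro mult_left_mono) (auto simp: w_def)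
    finally show ?thesis by (simp add: w_def mult_ac)
  qed
  define Pf where "Pf Z t = exp (- c * \<bar>t\<bar>) *\<^sub>R (z0 + ivl (Gz Z) t)" for Z t
  have ivld: "(ivl (Gz Z) has_vector_derivative Gz Z t) (at t)" for Z t
    by (rule ivl_deriv[OF contG])
  have ivlbd: "norm (ivl (Gz Z) t) \<le> K * norm Z / c * exp (c * \<bar>t\<bar>)" for Z t
    using exp_growth[of "ivl (Gz Z)" "Gz Z" "K * norm Z" c t, OF ivl_0 ivld Gbd c] K by simp
  have Pf_in: "Pf Z \<in> bcontfun" for Z
  proof -
    have "continuous_on UNIV (ivl (Gz Z))"
      using ivld has_vector_derivative_continuous continuous_at_imp_continuous_on by blast
    then have cont: "continuous_on UNIV (Pf Z)" unfolding Pf_def by (intro continuous_intros)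
    have "norm (Pf Z t) \<le> norm z0 + K * norm Z / c" for t
    proof -
      have "norm (Pf Z t) = exp (- c * \<bar>t\<bar>) * norm (z0 + ivl (Gz Z) t)" by (simp add: Pf_def)
      also have "\<dots> \<le> exp (- c * \<bar>t\<bar>) * (norm z0 + K * norm Z / c * exp (c * \<bar>t\<bar>))"
        by (intro mult_left_mono order.trans[OF norm_triangle_ineq] add_left_mono ivlbd) auto
      also have "\<dots> = exp (- c * \<bar>t\<bar>) * norm z0 + K * norm Z / c"
        by (simp add: algebra_simps exp_minus field_simps)
      also have "\<dots> \<le> norm z0 + K * norm Z / c"
      proof -
        have "exp (- c * \<bar>t\<bar>) \<le> 1" using c by simp
        then show ?thesis by (simp add: mult_left_le_one_le)
      qed
      finally show ?thesis .
    qed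
    then have "bounded (range (Pf Z))" unfolding bounded_iff by blast
    with cont show ?thesis unfolding bcontfun_def by simp
  qed
  define P where "P Z = Bcontfun (Pf Z)" for Z
  have Papp: "apply_bcontfun (P Z) = Pf Z" for Z unfolding P_def using Pf_in Bcontfun_inverse by blast
  have contr: "dist (P Z1) (P Z2) \<le> (1/2) * dist Z1 Z2" for Z1 Z2
  proof (rule dist_bound)
    fix t
    define J where "J s = ivl (Gz Z1) s - ivl (Gz Z2) s" for s
    have Jd: "(J has_vector_derivative Gz Z1 s - Gz Z2 s) (at s)" for s
      unfolding J_def by (intro has_vector_derivative_diff ivld)
    have Jbd: "norm (Gz Z1 s - Gz Z2 s) \<le> K * dist Z1 Z2 * exp (c * \<bar>s\<bar>)" for s
    proof -
      have "norm (Gz Z1 s - Gz Z2 s) \<le> K * norm (w s *\<^sub>R apply_bcontfun Z1 s - w s *\<^sub>R apply_bcontfun Z2 s)"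
        unfolding Gz_def by (rule lip)
      also have "\<dots> = K * w s * dist (apply_bcontfun Z1 s) (apply_bcontfun Z2 s)"
        by (simp add: w_def dist_norm flip: scaleR_diff_right)
      also have "\<dots> \<le> K * w s * dist Z1 Z2"
        using K by (intro mult_left_mono dist_bounded) (auto simp: w_def)
      finally show ?thesis by (simp add: w_def mult_ac)
    qed
    have "norm (J t) \<le> K * dist Z1 Z2 / c * exp (c * \<bar>t\<bar>)"
      by (rule exp_growth[OF _ Jd Jbd c]) (use K in \<open>auto simp: J_def\<close>)
    moreover have "Pf Z1 t - Pf Z2 t = exp (- c * \<bar>t\<bar>) *\<^sub>R J t"
      by (simp add: Pf_def J_def algebra_simps)
    ultimately have "dist (Pf Z1 t) (Pf Z2 t) \<le> exp (- c * \<bar>t\<bar>) * (K * dist Z1 Z2 / c * exp (c * \<bar>t\<bar>))"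
      unfolding dist_norm by (metis exp_gt_zero less_eq_real_def mult_left_mono norm_scaleR abs_of_pos)
    also have "\<dots> = K * dist Z1 Z2 / c"
      by (simp add: exp_minus field_simps)
    also have "\<dots> = (1/2) * dist Z1 Z2" using K by (simp add: c_def)
    finally show "dist (apply_bcontfun (P Z1) t) (apply_bcontfun (P Z2) t) \<le> (1/2) * dist Z1 Z2"
      by (simp add: Papp)
  qed
  obtain Z where Z: "P Z = Z" using banach_fix_type[of "1/2" P] contr by auto
  define Y where "Y t = z0 + ivl (Gz Z) t" for t
  have YZ: "Y t = w t *\<^sub>R apply_bcontfun Z t" for t
  proof -
    have "apply_bcontfun Z t = Pf Z t" using Z Papp by metis
    then have "w t *\<^sub>R apply_bcontfun Z t = w t *\<^sub>R (exp (- c * \<bar>t\<bar>) *\<^sub>R Y t)" by (simp add: Pf_def Y_def)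
    also have "\<dots> = Y t" by (simp add: w_def exp_minus)
    finally show ?thesis by simp
  qed
  have GY: "Gz Z t = F (Y t)" for t by (simp add: Gz_def YZ)
  have "(Y has_vector_derivative F (Y t)) (at t)" for t
  proof -
    have "((\<lambda>t. z0 + ivl (Gz Z) t) has_vector_derivative 0 + Gz Z t) (at t)"
      by (rule has_vector_derivative_add[OF has_vector_derivative_const ivld])
    then show ?thesis by (simp add: GY Y_def[abs_def])
  qed
  moreover have "Y 0 = z0" by (simp add: Y_def)
  ultimately show ?thesis by blast
qed

locale hsys =
  fixes g :: "'a::euclidean_space \<Rightarrow> 'a" and H :: "'a \<Rightarrow> ('a \<Rightarrow>\<^sub>L 'a)"
    and D3 :: "'a \<Rightarrow> ('a \<Rightarrow>\<^sub>L ('a \<Rightarrow>\<^sub>L 'a))" and L M :: real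
  assumes hess: "\<And>z. (g has_derivative blinfun_apply (H z)) (at z)"
    and third: "\<And>z. (H has_derivative blinfun_apply (D3 z)) (at z)"
    and Lb: "\<And>z. norm (H z) \<le> L" and Mb: "\<And>z. norm (D3 z) \<le> M" and g0: "g 0 = 0"
begin

lemma L_nn: "0 \<le> L" using Lb[of 0] norm_ge_zero order_trans by blast
lemma M_nn: "0 \<le> M" using Mb[of 0] norm_ge_zero order_trans by blast

lemma g_lip: "norm (g a - g b) \<le> L * norm (a - b)"
  by (rule differentiable_bound[of UNIV g "\<lambda>z. blinfun_apply (H z)" L a b])
     (use hess Lb in \<open>auto simp: norm_blinfun.rep_eq[symmetric] intro: has_derivative_at_withinI\<close>)

lemma g_bd: "norm (g a) \<le> L * norm a"
  using g_lip[of a 0] by (simp add: g0)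

lemma sol_D:
  assumes "ham_sol g x v X V"
  shows "X 0 = x" "V 0 = v" "\<And>s. (X has_vector_derivative V s) (at s)"
    "\<And>s. (V has_vector_derivative - g (X s)) (at s)"
  using assms by (auto simp: ham_sol_def)

lemma exists: "\<exists>X V. ham_sol g x v X V"
proof -
  define F where "F p = (snd p, - g (fst p))" for p :: "'a \<times> 'a"
  have lip: "norm (F p - F q) \<le> (1 + L) * norm (p - q)" for p q
  proof -
    have "norm (F p - F q) = norm (snd p - snd q, - (g (fst p) - g (fst q)))"
      by (simp add: F_def)
    also have "\<dots> \<le> norm (snd p - snd q) + norm (g (fst p) - g (fst q))"
      using norm_Pair_le by (metis norm_minus_cancel)
    also have "\<dots> \<le> norm (p - q) + L * norm (p - q)"
    proof (rule add_mono)
      show "norm (snd p - snd q) \<le> norm (p - q)"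
        by (metis norm_snd_le prod.collapse snd_diff)
      have "norm (fst p - fst q) \<le> norm (p - q)"
        by (metis norm_fst_le prod.collapse fst_diff)
      then show "norm (g (fst p) - g (fst q)) \<le> L * norm (p - q)"
        using g_lip[of "fst p" "fst q"] L_nn by (meson mult_left_mono order_trans)
    qed
    finally show ?thesis by (simp add: algebra_simps)
  qed
  have F0: "F 0 = 0" by (simp add: F_def g0 zero_prod_def)
  obtain Y where Y0: "Y 0 = (x, v)" and Yd: "\<And>t. (Y has_vector_derivative F (Y t)) (at t)"
    using ode_exists[of F "1 + L" "(x, v)", OF lip F0] L_nn by auto
  define X where "X t = fst (Y t)" for t
  define V where "V t = snd (Y t)" for t
  have "(X has_vector_derivative V t) (at t)" for t
    using bounded_linear.has_vector_derivative[OF bounded_linear_fst Yd[of t]]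
    by (simp add: X_def[abs_def] V_def F_def)
  moreover have "(V has_vector_derivative - g (X t)) (at t)" for t
    using bounded_linear.has_vector_derivative[OF bounded_linear_snd Yd[of t]]
    by (simp add: X_def V_def[abs_def] F_def)
  ultimately have "ham_sol g x v X V" unfolding ham_sol_def using Y0 by (simp add: X_def V_def)
  then show ?thesis by blast
qed

lemma zero_sol: "ham_sol g 0 0 (\<lambda>_. 0) (\<lambda>_. 0)"
  by (simp add: ham_sol_def g0)

lemma compare:
  assumes s1: "ham_sol g x1 v1 X1 V1" and s2: "ham_sol g x2 v2 X2 V2"
    and t0: "0 \<le> t0" and sm: "L * t0\<^sup>2 \<le> 1/12"
  shows "\<forall>s\<in>{0..t0}. norm (X1 s - X2 s) \<le> 24/23 * (norm (x1 - x2) + t0 * norm (v1 - v2))"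
    and "\<forall>s\<in>{0..t0}. norm (V1 s - V2 s - (v1 - v2)) \<le> L * s * (24/23 * (norm (x1 - x2) + t0 * norm (v1 - v2)))"
    and "norm (X1 t0 - X2 t0 - (x1 - x2) - t0 *\<^sub>R (v1 - v2)) \<le> (norm (x1 - x2) + t0 * norm (v1 - v2)) / 23"
proof -
  define A where "A = norm (x1 - x2) + t0 * norm (v1 - v2)"
  define D where "D s = X1 s - X2 s" for s
  note d1 = sol_D[OF s1] and d2 = sol_D[OF s2]
  have Dd: "(D has_vector_derivative V1 s - V2 s) (at s)" for s
    unfolding D_def[abs_def] by (intro has_vector_derivative_diff d1 d2)
  have "continuous_on {0..t0} (\<lambda>s. norm (D s))"
    using Dd has_vector_derivative_continuous continuous_at_imp_continuous_on
    by (intro continuous_intros) blast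
  then obtain sm where sm0: "sm \<in> {0..t0}" and smax: "\<And>s. s \<in> {0..t0} \<Longrightarrow> norm (D s) \<le> norm (D sm)"
    using continuous_attains_sup[of "{0..t0}" "\<lambda>s. norm (D s)"] t0 by auto
  define S where "S = norm (D sm)"
  have S0: "S \<ge> 0" by (simp add: S_def)
  define Rp where "Rp u = V1 u - V2 u - (v1 - v2)" for u
  define R where "R u = D u - (x1 - x2) - u *\<^sub>R (v1 - v2)" for u
  have Rpd: "(Rp has_vector_derivative - (g (X1 u) - g (X2 u))) (at u)" for u
    unfolding Rp_def[abs_def] using has_vector_derivative_diff[OF has_vector_derivative_diff[OF d1(4) d2(4)] has_vector_derivative_const]
    by simp
  have Rd: "(R has_vector_derivative Rp u) (at u)" for u
  proof -
    have "((\<lambda>u. D u - (x1 - x2) - u *\<^sub>R (v1 - v2)) has_vector_derivative (V1 u - V2 u) - 0 - (u *\<^sub>R 0 + 1 *\<^sub>R (v1 - v2))) (at u)"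
      by (intro has_vector_derivative_diff Dd has_vector_derivative_const has_vector_derivative_scaleR) 
         (auto intro!: derivative_eq_intros)
    then show ?thesis by (simp add: R_def[abs_def] Rp_def)
  qed
  have Rpb: "norm (Rp s) \<le> L * S * s" and Rb: "norm (R s) \<le> L * S * s\<^sup>2 / 2" if s: "s \<in> {0..t0}" for s
  proof -
    have "norm (Rp s - Rp 0) \<le> L * S * s - L * S * 0"
    proof (rule growth[OF _ Rpd])
      show "0 \<le> s" using s by simp
      fix u assume u: "u \<in> {0..s}"
      show "((\<lambda>u. L * S * u) has_real_derivative L * S) (at u)" by (auto intro!: derivative_eq_intros)
      have "norm (- (g (X1 u) - g (X2 u))) \<le> L * norm (D u)" using g_lip[of "X1 _" "X2 _"] by (simp add: D_def norm_minus_commute)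
      also have "\<dots> \<le> L * S" using smax[of u] u s L_nn by (auto simp: S_def intro!: mult_left_mono)
      finally show "norm (- (g (X1 u) - g (X2 u))) \<le> L * S" .
    qed
    then show "norm (Rp s) \<le> L * S * s" by (simp add: Rp_def d1 d2)
    have "norm (R s - R 0) \<le> L * S * s\<^sup>2 / 2 - L * S * 0\<^sup>2 / 2"
    proof (rule growth[OF _ Rd])
      show "0 \<le> s" using s by simp
      fix u assume u: "u \<in> {0..s}"
      show "((\<lambda>u. L * S * u\<^sup>2 / 2) has_real_derivative L * S * u) (at u)" by (auto intro!: derivative_eq_intros)
      have "norm (Rp u - Rp 0) \<le> L * S * u - L * S * 0"
      proof (rule growth[OF _ Rpd])
        show "0 \<le> u" using u by simp
        fix r assume r: "r \<in> {0..u}"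
        show "((\<lambda>u. L * S * u) has_real_derivative L * S) (at r)" by (auto intro!: derivative_eq_intros)
        have "norm (- (g (X1 r) - g (X2 r))) \<le> L * norm (D r)" using g_lip[of "X1 _" "X2 _"] by (simp add: D_def norm_minus_commute)
        also have "\<dots> \<le> L * S" using smax[of r] u r s L_nn by (auto simp: S_def intro!: mult_left_mono)
        finally show "norm (- (g (X1 r) - g (X2 r))) \<le> L * S" .
      qed
      then show "norm (Rp u) \<le> L * S * u" by (simp add: Rp_def d1 d2)
    qed
    then show "norm (R s) \<le> L * S * s\<^sup>2 / 2" by (simp add: R_def D_def d1 d2)
  qed
  have Db: "norm (D s) \<le> A + L * t0\<^sup>2 / 2 * S" if s: "s \<in> {0..t0}" for s
  proof -
    have "D s = R s + (x1 - x2) + s *\<^sub>R (v1 - v2)" by (simp add: R_def)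
    then have "norm (D s) \<le> norm (R s) + norm (x1 - x2) + norm (s *\<^sub>R (v1 - v2))"
      by (metis norm_triangle_ineq add_right_mono order_trans)
    also have "\<dots> = norm (R s) + norm (x1 - x2) + s * norm (v1 - v2)" using s by simp
    also have "\<dots> \<le> L * S * s\<^sup>2 / 2 + norm (x1 - x2) + t0 * norm (v1 - v2)"
      using Rb[OF s] s by (intro add_mono mult_right_mono) auto
    also have "L * S * s\<^sup>2 / 2 \<le> L * t0\<^sup>2 / 2 * S"
    proof -
      have "s\<^sup>2 \<le> t0\<^sup>2" using s by (intro power_mono) auto
      then show ?thesis using L_nn S0 by (simp add: mult_left_mono mult_right_mono mult_ac divide_right_mono)
    qed
    finally show ?thesis by (simp add: A_def)
  qed
  have "S \<le> A + L * t0\<^sup>2 / 2 * S" using Db[OF sm0] by (simp add: S_def)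
  moreover have "L * t0\<^sup>2 / 2 * S \<le> S / 24"
  proof -
    have "L * t0\<^sup>2 / 2 * S \<le> (1/12) / 2 * S" using sm S0 by (intro mult_right_mono divide_right_mono) auto
    then show ?thesis by simp
  qed
  ultimately have SA: "S \<le> 24/23 * A" by linarith
  show "\<forall>s\<in>{0..t0}. norm (X1 s - X2 s) \<le> 24/23 * (norm (x1 - x2) + t0 * norm (v1 - v2))"
  proof
    fix s assume "s \<in> {0..t0}"
    then have "norm (D s) \<le> S" using smax by (simp add: S_def)
    then show "norm (X1 s - X2 s) \<le> 24/23 * (norm (x1 - x2) + t0 * norm (v1 - v2))"
      using SA by (simp add: D_def A_def)
  qed
  show "\<forall>s\<in>{0..t0}. norm (V1 s - V2 s - (v1 - v2)) \<le> L * s * (24/23 * (norm (x1 - x2) + t0 * norm (v1 - v2)))"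
  proof
    fix s assume s: "s \<in> {0..t0}"
    have "(L * s) * S \<le> (L * s) * (24/23 * A)" using SA L_nn s
      by (intro mult_left_mono) auto
    then have "L * S * s \<le> L * s * (24/23 * A)" by (simp add: mult_ac)
    then show "norm (V1 s - V2 s - (v1 - v2)) \<le> L * s * (24/23 * (norm (x1 - x2) + t0 * norm (v1 - v2)))"
      using Rpb[OF s] by (simp add: Rp_def A_def)
  qed
  have "norm (R t0) \<le> L * t0\<^sup>2 / 2 * S" using Rb[of t0] t0 by (simp add: mult_ac)
  also have "\<dots> \<le> S / 24" by fact
  also have "\<dots> \<le> A / 23" using SA by simp
  finally show "norm (X1 t0 - X2 t0 - (x1 - x2) - t0 *\<^sub>R (v1 - v2)) \<le> (norm (x1 - x2) + t0 * norm (v1 - v2)) / 23"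
    by (simp add: R_def D_def A_def)
qed

end

context hsys begin

lemma phi_d:
  assumes s: "ham_sol g x v X V"
  shows "((\<lambda>t. g (X t)) has_vector_derivative blinfun_apply (H (X t)) (V t)) (at t)"
proof -
  have "((\<lambda>t. g (X t)) has_derivative (\<lambda>k. blinfun_apply (H (X t)) (k *\<^sub>R V t))) (at t)"
    using has_derivative_compose[OF sol_D(3)[OF s, of t, unfolded has_vector_derivative_def] hess] .
  then show ?thesis by (simp add: has_vector_derivative_def blinfun.scaleR_right)
qed

lemma Hx_d:
  assumes s: "ham_sol g x v X V"
  shows "((\<lambda>t. H (X t)) has_vector_derivative blinfun_apply (D3 (X t)) (V t)) (at t)"
proof -
  have "((\<lambda>t. H (X t)) has_derivative (\<lambda>k. blinfun_apply (D3 (X t)) (k *\<^sub>R V t))) (at t)"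
    using has_derivative_compose[OF sol_D(3)[OF s, of t, unfolded has_vector_derivative_def] third] .
  then show ?thesis by (simp add: has_vector_derivative_def blinfun.scaleR_right)
qed

lemma phi1_d:
  assumes s: "ham_sol g x v X V"
  shows "((\<lambda>t. blinfun_apply (H (X t)) (V t)) has_vector_derivative
      blinfun_apply (H (X t)) (- g (X t)) + blinfun_apply (blinfun_apply (D3 (X t)) (V t)) (V t)) (at t)"
  using bounded_bilinear.has_vector_derivative[OF bounded_bilinear_blinfun_apply Hx_d[OF s] sol_D(4)[OF s]] .

lemma ham_q_eq:
  assumes s: "ham_sol g x v X V" and T: "0 \<le> T" and sm: "L * T\<^sup>2 \<le> 1/12"
  shows "ham_q g T x v = X T"
  unfolding ham_q_def
proof (rule the_equality)
  show "\<exists>X' V'. ham_sol g x v X' V' \<and> X' T = X T" using s by blast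
  fix p assume "\<exists>X' V'. ham_sol g x v X' V' \<and> X' T = p"
  then obtain X' V' where s': "ham_sol g x v X' V'" and p: "X' T = p" by blast
  have "norm (X' T - X T - (x - x) - T *\<^sub>R (v - v)) \<le> (norm (x - x) + T * norm (v - v)) / 23"
    by (rule compare(3)[OF s' s T sm])
  then show "p = X T" using p by simp
qed

lemma sol_bounds:
  assumes s: "ham_sol g x v X V" and T: "0 \<le> T" and sm: "L * T\<^sup>2 \<le> 1/12"
  shows "\<forall>t\<in>{0..T}. norm (X t) \<le> 24/23 * (norm x + T * norm v)"
    and "\<forall>t\<in>{0..T}. norm (V t) \<le> norm v + L * T * (24/23 * (norm x + T * norm v))"
proof -
  note c = compare[OF s zero_sol T sm]
  show "\<forall>t\<in>{0..T}. norm (X t) \<le> 24/23 * (norm x + T * norm v)" using c(1) by simp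
  show "\<forall>t\<in>{0..T}. norm (V t) \<le> norm v + L * T * (24/23 * (norm x + T * norm v))"
  proof
    fix t assume t: "t \<in> {0..T}"
    have "norm (V t - v) \<le> L * t * (24/23 * (norm x + T * norm v))" using c(2) t by simp
    also have "\<dots> \<le> L * T * (24/23 * (norm x + T * norm v))"
      using t L_nn by (intro mult_right_mono mult_left_mono) auto
    finally have "norm (V t - v) \<le> L * T * (24/23 * (norm x + T * norm v))" .
    then show "norm (V t) \<le> norm v + L * T * (24/23 * (norm x + T * norm v))"
      by (metis add.commute diff_add_cancel norm_triangle_ineq order_trans add_left_mono)
  qed
qed

lemma tau_bound:
  assumes s: "ham_sol g x v X V" and h: "0 \<le> h"
    and Vb: "\<And>t. t \<in> {a..a+h} \<Longrightarrow> norm (V t) \<le> Vm"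
  shows "norm (X (a + h) - X a - h *\<^sub>R V a + (h\<^sup>2 / 2) *\<^sub>R g (X a)) \<le> L * Vm * h ^ 3 / 6"
proof -
  note d = sol_D[OF s]
  define r1 where "r1 t = V t - V a + (t - a) *\<^sub>R g (X a)" for t
  define r where "r t = X t - X a - (t - a) *\<^sub>R V a + ((t - a)\<^sup>2 / 2) *\<^sub>R g (X a)" for t
  have r1d: "(r1 has_vector_derivative - g (X t) + g (X a)) (at t)" for t
  proof -
    have s1: "((\<lambda>t. t - a) has_real_derivative 1) (at t)" by (auto intro!: derivative_eq_intros)
    have "(r1 has_vector_derivative - g (X t) - 0 + ((t - a) *\<^sub>R 0 + 1 *\<^sub>R g (X a))) (at t)"
      unfolding r1_def[abs_def]
      by (intro has_vector_derivative_add has_vector_derivative_diff d(4) has_vector_derivative_const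
          has_vector_derivative_scaleR s1)
    then show ?thesis by simp
  qed
  have rd: "(r has_vector_derivative r1 t) (at t)" for t
  proof -
    have s1: "((\<lambda>t. t - a) has_real_derivative 1) (at t)" by (auto intro!: derivative_eq_intros)
    have s2: "((\<lambda>t. (t - a)\<^sup>2 / 2) has_real_derivative (t - a)) (at t)"
      by (auto intro!: derivative_eq_intros simp: power2_eq_square)
    have "(r has_vector_derivative V t - 0 - ((t - a) *\<^sub>R 0 + 1 *\<^sub>R V a) + (((t - a)\<^sup>2 / 2) *\<^sub>R 0 + (t - a) *\<^sub>R g (X a))) (at t)"
      unfolding r_def[abs_def]
      by (intro has_vector_derivative_add has_vector_derivative_diff d(3) has_vector_derivative_const
          has_vector_derivative_scaleR s1 s2)
    then show ?thesis by (simp add: r1_def)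
  qed
  have Xb: "norm (X t - X a) \<le> Vm * (t - a)" if t: "t \<in> {a..a+h}" for t
  proof -
    have "norm (X t - X a) \<le> Vm * t - Vm * a"
    proof (rule growth[OF _ d(3)])
      show "a \<le> t" using t by simp
      fix u assume "u \<in> {a..t}"
      then show "((\<lambda>u. Vm * u) has_real_derivative Vm) (at u)" "norm (V u) \<le> Vm"
        using t Vb[of u] by (auto intro!: derivative_eq_intros)
    qed
    then show ?thesis by (simp add: algebra_simps)
  qed
  have r1b: "norm (r1 t) \<le> L * Vm * (t - a)\<^sup>2 / 2" if t: "t \<in> {a..a+h}" for t
  proof -
    have "norm (r1 t - r1 a) \<le> L * Vm * (t - a)\<^sup>2 / 2 - L * Vm * (a - a)\<^sup>2 / 2"
    proof (rule growth[OF _ r1d])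
      show "a \<le> t" using t by simp
      fix u assume u: "u \<in> {a..t}"
      show "((\<lambda>u. L * Vm * (u - a)\<^sup>2 / 2) has_real_derivative L * Vm * (u - a)) (at u)"
        by (auto intro!: derivative_eq_intros)
      have "norm (- g (X u) + g (X a)) = norm (g (X u) - g (X a))"
        by (metis minus_diff_eq norm_minus_cancel uminus_add_conv_diff)
      also have "\<dots> \<le> L * norm (X u - X a)" by (rule g_lip)
      also have "\<dots> \<le> L * (Vm * (u - a))" using Xb[of u] u t L_nn by (intro mult_left_mono) auto
      finally show "norm (- g (X u) + g (X a)) \<le> L * Vm * (u - a)" by (simp add: mult_ac)
    qed
    then show ?thesis by (simp add: r1_def)
  qed
  have "norm (r (a + h) - r a) \<le> L * Vm * ((a + h) - a) ^ 3 / 6 - L * Vm * (a - a) ^ 3 / 6"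
  proof (rule growth[OF _ rd])
    show "a \<le> a + h" using h by simp
    fix u assume u: "u \<in> {a..a+h}"
    show "((\<lambda>u. L * Vm * (u - a) ^ 3 / 6) has_real_derivative L * Vm * (u - a)\<^sup>2 / 2) (at u)"
      by (auto intro!: derivative_eq_intros simp: power2_eq_square)
    show "norm (r1 u) \<le> L * Vm * (u - a)\<^sup>2 / 2" by (rule r1b[OF u])
  qed
  then show ?thesis by (simp add: r_def)
qed

end

context hsys begin

lemma sigma_bound:
  assumes s: "ham_sol g x v X V" and h: "0 \<le> h"
    and Vb: "\<And>t. t \<in> {a..a+h} \<Longrightarrow> norm (V t) \<le> Vm"
    and Xb: "\<And>t. t \<in> {a..a+h} \<Longrightarrow> norm (X t) \<le> Xm"
  shows "norm (V (a + h) - V a + (h / 2) *\<^sub>R (g (X a) + g (X (a + h)))) \<le> (M * Vm\<^sup>2 + L * L * Xm) * h ^ 3 / 12"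
proof -
  note d = sol_D[OF s]
  define K0 where "K0 = M * Vm\<^sup>2 + L * L * Xm"
  define \<phi> where "\<phi> t = g (X t)" for t
  define \<phi>1 where "\<phi>1 t = blinfun_apply (H (X t)) (V t)" for t
  define \<phi>2 where "\<phi>2 t = blinfun_apply (H (X t)) (- g (X t)) + blinfun_apply (blinfun_apply (D3 (X t)) (V t)) (V t)" for t
  have \<phi>d: "(\<phi> has_vector_derivative \<phi>1 t) (at t)" for t
    unfolding \<phi>_def[abs_def] \<phi>1_def by (rule phi_d[OF s])
  have \<phi>1d: "(\<phi>1 has_vector_derivative \<phi>2 t) (at t)" for t
    unfolding \<phi>1_def[abs_def] \<phi>2_def by (rule phi1_d[OF s])
  have s1: "((\<lambda>t. (t - a) / 2) has_real_derivative 1 / 2) (at t)" for t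
    by (auto intro!: derivative_eq_intros)
  define e1 where "e1 t = (1/2) *\<^sub>R (\<phi> a - \<phi> t) + ((t - a) / 2) *\<^sub>R \<phi>1 t" for t
  define e where "e t = V t - V a + ((t - a) / 2) *\<^sub>R (\<phi> a + \<phi> t)" for t
  have ed: "(e has_vector_derivative e1 t) (at t)" for t
  proof -
    have "(e has_vector_derivative - g (X t) - 0 + (((t - a) / 2) *\<^sub>R (0 + \<phi>1 t) + (1 / 2) *\<^sub>R (\<phi> a + \<phi> t))) (at t)"
      unfolding e_def[abs_def]
      by (intro has_vector_derivative_add has_vector_derivative_diff d(4) has_vector_derivative_const
          has_vector_derivative_scaleR s1 \<phi>d)
    then show ?thesis
      by (rule has_vector_derivative_eq_rhs) (simp add: e1_def \<phi>_def algebra_simps flip: scaleR_add_left)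
  qed
  have e1d: "(e1 has_vector_derivative ((t - a) / 2) *\<^sub>R \<phi>2 t) (at t)" for t
  proof -
    have "(e1 has_vector_derivative (1/2) *\<^sub>R (0 - \<phi>1 t) + (((t - a) / 2) *\<^sub>R \<phi>2 t + (1 / 2) *\<^sub>R \<phi>1 t)) (at t)"
      unfolding e1_def[abs_def]
      by (intro has_vector_derivative_add has_vector_derivative_diff has_vector_derivative_const
          has_vector_derivative_scaleR s1 \<phi>d \<phi>1d
          bounded_linear.has_vector_derivative[OF bounded_linear_scaleR_right])
    then show ?thesis
      by (rule has_vector_derivative_eq_rhs) (simp add: algebra_simps)
  qed
  have \<phi>2b: "norm (\<phi>2 t) \<le> K0" if t: "t \<in> {a..a+h}" for t
  proof -
    have "norm (\<phi>2 t) \<le> norm (blinfun_apply (H (X t)) (- g (X t))) + norm (blinfun_apply (blinfun_apply (D3 (X t)) (V t)) (V t))"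
      unfolding \<phi>2_def by (rule norm_triangle_ineq)
    also have "norm (blinfun_apply (H (X t)) (- g (X t))) \<le> L * (L * Xm)"
    proof -
      have "norm (blinfun_apply (H (X t)) (- g (X t))) \<le> norm (H (X t)) * norm (g (X t))"
        using norm_blinfun by (metis norm_minus_cancel)
      also have "\<dots> \<le> L * (L * Xm)"
      proof (rule mult_mono)
        show "norm (H (X t)) \<le> L" by (rule Lb)
        show "norm (g (X t)) \<le> L * Xm" using g_bd[of "X t"] Xb[OF t] L_nn
          by (meson mult_left_mono order_trans)
      qed (use L_nn in auto)
      finally show ?thesis .
    qed
    also have "norm (blinfun_apply (blinfun_apply (D3 (X t)) (V t)) (V t)) \<le> M * Vm\<^sup>2"
    proof -
      have "norm (blinfun_apply (blinfun_apply (D3 (X t)) (V t)) (V t)) \<le> norm (blinfun_apply (D3 (X t)) (V t)) * norm (V t)"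
        by (rule norm_blinfun)
      also have "\<dots> \<le> (norm (D3 (X t)) * norm (V t)) * norm (V t)"
        by (intro mult_right_mono norm_blinfun) auto
      also have "\<dots> \<le> (M * Vm) * Vm"
        using Mb[of "X t"] Vb[OF t] M_nn order_trans[OF norm_ge_zero Vb[OF t]] by (intro mult_mono) auto
      finally show ?thesis by (simp add: power2_eq_square mult_ac)
    qed
    finally show ?thesis by (simp add: K0_def mult_ac)
  qed
  have K0: "0 \<le> K0" using \<phi>2b[of a] h by (auto intro: order_trans[OF norm_ge_zero])
  have e1b: "norm (e1 t) \<le> K0 * (t - a)\<^sup>2 / 4" if t: "t \<in> {a..a+h}" for t
  proof -
    have "norm (e1 t - e1 a) \<le> K0 * (t - a)\<^sup>2 / 4 - K0 * (a - a)\<^sup>2 / 4"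
    proof (rule growth[OF _ e1d])
      show "a \<le> t" using t by simp
      fix u assume u: "u \<in> {a..t}"
      show "((\<lambda>u. K0 * (u - a)\<^sup>2 / 4) has_real_derivative K0 * (u - a) / 2) (at u)"
        by (auto intro!: derivative_eq_intros simp: power2_eq_square)
      have "norm (((u - a) / 2) *\<^sub>R \<phi>2 u) = ((u - a) / 2) * norm (\<phi>2 u)" using u by simp
      also have "\<dots> \<le> ((u - a) / 2) * K0" using \<phi>2b[of u] u t by (intro mult_left_mono) auto
      finally show "norm (((u - a) / 2) *\<^sub>R \<phi>2 u) \<le> K0 * (u - a) / 2" by (simp add: mult.commute)
    qed
    then show ?thesis by (simp add: e1_def)
  qed
  have "norm (e (a + h) - e a) \<le> K0 * ((a + h) - a) ^ 3 / 12 - K0 * (a - a) ^ 3 / 12"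
  proof (rule growth[OF _ ed])
    show "a \<le> a + h" using h by simp
    fix u assume u: "u \<in> {a..a+h}"
    show "((\<lambda>u. K0 * (u - a) ^ 3 / 12) has_real_derivative K0 * (u - a)\<^sup>2 / 4) (at u)"
      by (auto intro!: derivative_eq_intros simp: power2_eq_square)
    show "norm (e1 u) \<le> K0 * (u - a)\<^sup>2 / 4" by (rule e1b[OF u])
  qed
  then show ?thesis by (simp add: e_def K0_def \<phi>_def)
qed

end

lemma norm4: "norm (a + b - c - d) \<le> norm a + norm b + norm c + norm (d::'b::real_normed_vector)"
proof -
  have "norm (a + b - c - d) \<le> norm (a + b - c) + norm d" by (rule norm_triangle_ineq4)
  also have "norm (a + b - c) \<le> norm (a + b) + norm c" by (rule norm_triangle_ineq4)
  also have "norm (a + b) \<le> norm a + norm b" by (rule norm_triangle_ineq)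
  finally show ?thesis by simp
qed

lemma norm3: "norm (a - c - d) \<le> norm a + norm c + norm (d::'b::real_normed_vector)"
proof -
  have "norm (a - c - d) \<le> norm (a - c) + norm d" by (rule norm_triangle_ineq4)
  also have "norm (a - c) \<le> norm a + norm c" by (rule norm_triangle_ineq4)
  finally show ?thesis by simp
qed

context hsys begin

lemma discrete_error:
  fixes xs vs Xs Vs :: "nat \<Rightarrow> 'a" and N :: nat
  assumes xs: "\<And>j. xs (Suc j) = xs j + h *\<^sub>R vs j - (h\<^sup>2 / 2) *\<^sub>R g (xs j)"
    and vs: "\<And>j. vs (Suc j) = vs j - (h / 2) *\<^sub>R (g (xs j) + g (xs (Suc j)))"
    and tau: "\<And>j. j < N \<Longrightarrow> norm (Xs (Suc j) - Xs j - h *\<^sub>R Vs j + (h\<^sup>2 / 2) *\<^sub>R g (Xs j)) \<le> \<tau>"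
    and sig: "\<And>j. j < N \<Longrightarrow> norm (Vs (Suc j) - Vs j + (h / 2) *\<^sub>R (g (Xs j) + g (Xs (Suc j)))) \<le> \<sigma>"
    and x0: "xs 0 = Xs 0" and v0: "vs 0 = Vs 0"
    and sm: "L * (real N * h)\<^sup>2 \<le> 1/12" and h: "0 \<le> h" and tau0: "0 \<le> \<tau>" and sig0: "0 \<le> \<sigma>"
  shows "norm (xs N - Xs N) \<le> 24/23 * (real N * \<tau> + h * \<sigma> * (real N)\<^sup>2 / 2)"
proof -
  define e where "e j = xs j - Xs j" for j
  define f where "f j = vs j - Vs j" for j
  define E where "E = Max ((\<lambda>j. norm (e j)) ` {..N})"
  have Ege: "norm (e j) \<le> E" if "j \<le> N" for j
    unfolding E_def using that by (intro Max_ge) auto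
  obtain jm where jm: "jm \<le> N" "E = norm (e jm)"
  proof -
    have "E \<in> (\<lambda>j. norm (e j)) ` {..N}" unfolding E_def by (intro Max_in) auto
    then show ?thesis using that by auto
  qed
  have E0: "0 \<le> E" using jm by simp
  have hL: "0 \<le> h * L" using h L_nn by simp
  have e_step: "norm (e (Suc j)) \<le> norm (e j) + h * norm (f j) + (h\<^sup>2 / 2) * L * norm (e j) + \<tau>" if j: "j < N" for j
  proof -
    define tj where "tj = Xs (Suc j) - Xs j - h *\<^sub>R Vs j + (h\<^sup>2 / 2) *\<^sub>R g (Xs j)"
    have "e (Suc j) = e j + h *\<^sub>R f j - (h\<^sup>2 / 2) *\<^sub>R (g (xs j) - g (Xs j)) - tj"
      by (simp add: e_def f_def tj_def xs algebra_simps)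
    then have "norm (e (Suc j)) \<le> norm (e j) + norm (h *\<^sub>R f j) + norm ((h\<^sup>2 / 2) *\<^sub>R (g (xs j) - g (Xs j))) + norm tj"
      by (simp only: norm4)
    also have "norm (h *\<^sub>R f j) = h * norm (f j)" using h by simp
    also have "norm ((h\<^sup>2 / 2) *\<^sub>R (g (xs j) - g (Xs j))) \<le> (h\<^sup>2 / 2) * (L * norm (e j))"
      using g_lip[of "xs j" "Xs j"] by (simp add: e_def mult_left_mono)
    also have "norm tj \<le> \<tau>" using tau[OF j] by (simp add: tj_def)
    finally show ?thesis by (simp add: mult_ac)
  qed
  have f_step: "norm (f (Suc j)) \<le> norm (f j) + (h / 2) * L * (norm (e j) + norm (e (Suc j))) + \<sigma>" if j: "j < N" for j
  proof -
    define sj where "sj = Vs (Suc j) - Vs j + (h / 2) *\<^sub>R (g (Xs j) + g (Xs (Suc j)))"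
    have "f (Suc j) = f j - (h / 2) *\<^sub>R ((g (xs j) - g (Xs j)) + (g (xs (Suc j)) - g (Xs (Suc j)))) - sj"
      by (simp add: f_def sj_def vs algebra_simps)
    then have "norm (f (Suc j)) \<le> norm (f j) + norm ((h / 2) *\<^sub>R ((g (xs j) - g (Xs j)) + (g (xs (Suc j)) - g (Xs (Suc j))))) + norm sj"
      by (simp only: norm3)
    also have "norm ((h / 2) *\<^sub>R ((g (xs j) - g (Xs j)) + (g (xs (Suc j)) - g (Xs (Suc j))))) \<le> (h / 2) * (L * norm (e j) + L * norm (e (Suc j)))"
    proof -
      have "norm ((g (xs j) - g (Xs j)) + (g (xs (Suc j)) - g (Xs (Suc j)))) \<le> L * norm (e j) + L * norm (e (Suc j))"
        using g_lip[of "xs j" "Xs j"] g_lip[of "xs (Suc j)" "Xs (Suc j)"]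
        unfolding e_def by (rule order_trans[OF norm_triangle_ineq add_mono])
      then show ?thesis using h by (simp add: mult_left_mono)
    qed
    also have "norm sj \<le> \<sigma>" using sig[OF j] by (simp add: sj_def)
    finally show ?thesis by (simp add: algebra_simps)
  qed
  have fb: "j \<le> N \<Longrightarrow> norm (f j) \<le> real j * \<sigma> + real j * (h * L) * E" for j
  proof (induction j)
    case 0 then show ?case by (simp add: f_def v0)
  next
    case (Suc j)
    then have j: "j < N" by simp
    have "norm (f (Suc j)) \<le> norm (f j) + (h / 2) * L * (norm (e j) + norm (e (Suc j))) + \<sigma>" by (rule f_step[OF j])
    also have "(h / 2) * L * (norm (e j) + norm (e (Suc j))) \<le> (h / 2) * L * (E + E)"
      using Ege[of j] Ege[of "Suc j"] j hL by (intro mult_left_mono add_mono) auto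
    also have "norm (f j) \<le> real j * \<sigma> + real j * (h * L) * E" using Suc j by simp
    finally show ?case by (simp add: algebra_simps)
  qed
  have eb: "j \<le> N \<Longrightarrow> norm (e j) \<le> real j * \<tau> + h * \<sigma> * real j * (real j - 1) / 2 + h\<^sup>2 * L * E * (real j)\<^sup>2 / 2" for j
  proof (induction j)
    case 0 then show ?case by (simp add: e_def x0)
  next
    case (Suc j)
    then have j: "j < N" by simp
    have "norm (e (Suc j)) \<le> norm (e j) + h * norm (f j) + (h\<^sup>2 / 2) * L * norm (e j) + \<tau>" by (rule e_step[OF j])
    also have "h * norm (f j) \<le> h * (real j * \<sigma> + real j * (h * L) * E)"
      using fb[of j] j h by (intro mult_left_mono) auto
    also have "(h\<^sup>2 / 2) * L * norm (e j) \<le> (h\<^sup>2 / 2) * L * E"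
      using Ege[of j] j L_nn by (intro mult_left_mono) auto
    also have "norm (e j) \<le> real j * \<tau> + h * \<sigma> * real j * (real j - 1) / 2 + h\<^sup>2 * L * E * (real j)\<^sup>2 / 2"
      using Suc j by simp
    finally have *: "norm (e (Suc j)) \<le> (real j * \<tau> + h * \<sigma> * real j * (real j - 1) / 2 + h\<^sup>2 * L * E * (real j)\<^sup>2 / 2) + h * (real j * \<sigma> + real j * (h * L) * E) + (h\<^sup>2 / 2) * L * E + \<tau>" by simp
    have **: "(real j * \<tau> + h * \<sigma> * real j * (real j - 1) / 2 + h\<^sup>2 * L * E * (real j)\<^sup>2 / 2) + h * (real j * \<sigma> + real j * (h * L) * E) + (h\<^sup>2 / 2) * L * E + \<tau>
       = real (Suc j) * \<tau> + h * \<sigma> * real (Suc j) * (real (Suc j) - 1) / 2 + h\<^sup>2 * L * E * (real (Suc j))\<^sup>2 / 2"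
      by (simp add: field_simps power2_eq_square)
    show ?case using * ** by linarith
  qed
  have "E \<le> real N * \<tau> + h * \<sigma> * (real N)\<^sup>2 / 2 + E / 24"
  proof -
    have "E \<le> real jm * \<tau> + h * \<sigma> * real jm * (real jm - 1) / 2 + h\<^sup>2 * L * E * (real jm)\<^sup>2 / 2"
      using eb[OF jm(1)] jm(2) by simp
    also have "real jm * \<tau> \<le> real N * \<tau>" using jm tau0 by (intro mult_right_mono) auto
    also have "h * \<sigma> * real jm * (real jm - 1) / 2 \<le> h * \<sigma> * (real N)\<^sup>2 / 2"
    proof -
      have "real jm * (real jm - 1) \<le> (real N)\<^sup>2"
      proof -
        have "real jm * (real jm - 1) \<le> real jm * real jm" by (simp add: mult_left_mono)
        also have "\<dots> \<le> real N * real N" using jm(1) by (intro mult_mono) auto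
        finally show ?thesis by (simp add: power2_eq_square)
      qed
      then have "(h * \<sigma>) * (real jm * (real jm - 1)) \<le> (h * \<sigma>) * (real N)\<^sup>2"
        using h sig0 by (intro mult_left_mono) auto
      then have "(h * \<sigma>) * (real jm * (real jm - 1)) / 2 \<le> (h * \<sigma>) * (real N)\<^sup>2 / 2"
        by (rule divide_right_mono) simp
      then show ?thesis by (simp add: mult_ac)
    qed
    also have "h\<^sup>2 * L * E * (real jm)\<^sup>2 / 2 \<le> E / 24"
    proof -
      have "(real jm)\<^sup>2 \<le> (real N)\<^sup>2" using jm(1) by (intro power_mono) auto
      then have "h\<^sup>2 * L * (real jm)\<^sup>2 \<le> h\<^sup>2 * L * (real N)\<^sup>2"
        using L_nn by (intro mult_left_mono) auto
      also have "\<dots> = L * (real N * h)\<^sup>2" by (simp add: power_mult_distrib mult_ac)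
      also have "\<dots> \<le> 1/12" by (rule sm)
      finally have "h\<^sup>2 * L * (real jm)\<^sup>2 \<le> 1/12" .
      then have "E * (h\<^sup>2 * L * (real jm)\<^sup>2) \<le> E * (1/12)" using E0 by (intro mult_left_mono) auto
      then show ?thesis by (simp add: mult_ac)
    qed
    finally show ?thesis by simp
  qed
  then have "E \<le> 24/23 * (real N * \<tau> + h * \<sigma> * (real N)\<^sup>2 / 2)"
  proof -
    assume a: "E \<le> real N * \<tau> + h * \<sigma> * (real N)\<^sup>2 / 2 + E / 24"
    define Q where "Q = real N * \<tau> + h * \<sigma> * (real N)\<^sup>2 / 2"
    from a have "E \<le> Q + E / 24" by (simp add: Q_def)
    then have "E \<le> 24/23 * Q" by linarith
    then show ?thesis by (simp add: Q_def)
  qed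
  moreover have "norm (xs N - Xs N) \<le> E" using Ege[of N] by (simp add: e_def)
  ultimately show ?thesis by simp
qed

end

lemma final_arith:
  fixes L M T nx nv :: real
  assumes L: "0 \<le> L" and M: "0 \<le> M" and T: "0 < T" and nx: "0 \<le> nx" and nv: "0 \<le> nv"
    and P: "L * T\<^sup>2 \<le> 1/12"
  shows "12/11 * (L * (nv + L * T * (24/23 * (nx + T * nv))) / 6
          + T * (M * (nv + L * T * (24/23 * (nx + T * nv)))\<^sup>2 + L * L * (24/23 * (nx + T * nv))) / 24)
        \<le> 2 * (L / T * nx + L * nv + M / T * nx\<^sup>2 + M * T * nv\<^sup>2)"
proof -
  define b where "b = T * nv"
  define p where "p = L * T\<^sup>2"
  have b0: "0 \<le> b" using T nv by (simp add: b_def)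
  have p0: "0 \<le> p" using L by (simp add: p_def)
  define Xm where "Xm = 24/23 * (nx + b)"
  have Xm0: "0 \<le> Xm" using nx b0 by (simp add: Xm_def)
  define W where "W = b + p * Xm"
  have W0: "0 \<le> W" using b0 p0 Xm0 by (simp add: W_def)
  define Wb where "Wb = 25/23 * b + 2/23 * nx"
  have pXm: "p * Xm \<le> 2/23 * (nx + b)"
  proof -
    have "p * Xm \<le> (1/12) * Xm" using P Xm0 by (intro mult_right_mono) (auto simp: p_def)
    then show ?thesis by (simp add: Xm_def)
  qed
  have WWb: "W \<le> Wb" using pXm by (simp add: W_def Wb_def algebra_simps)
  have W2: "W\<^sup>2 \<le> 2 * ((25/23)\<^sup>2 * b\<^sup>2 + (2/23)\<^sup>2 * nx\<^sup>2)"
  proof -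
    have "W\<^sup>2 \<le> Wb\<^sup>2" using WWb W0 by (intro power_mono) auto
    also have "Wb\<^sup>2 \<le> 2 * ((25/23)\<^sup>2 * b\<^sup>2 + (2/23)\<^sup>2 * nx\<^sup>2)"
    proof -
      have "0 \<le> (25/23 * b - 2/23 * nx)\<^sup>2" by simp
      then show ?thesis by (simp add: Wb_def power2_eq_square algebra_simps)
    qed
    finally show ?thesis .
  qed
  (* multiply the goal by T *)
  have key: "12/11 * (L * W / 6 + (M * W\<^sup>2 + L * p * Xm) / 24)
        \<le> 2 * (L * nx + L * b + M * nx\<^sup>2 + M * b\<^sup>2)"
  proof -
    have f1: "L * W \<le> 25/23 * (L * b) + 2/23 * (L * nx)"
    proof -
      have "L * W \<le> L * Wb" using WWb L by (simp add: mult_left_mono)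
      then show ?thesis by (simp add: Wb_def algebra_simps)
    qed
    have f2: "M * W\<^sup>2 \<le> 2 * (25/23)\<^sup>2 * (M * b\<^sup>2) + 2 * (2/23)\<^sup>2 * (M * nx\<^sup>2)"
    proof -
      have "M * W\<^sup>2 \<le> M * (2 * ((25/23)\<^sup>2 * b\<^sup>2 + (2/23)\<^sup>2 * nx\<^sup>2))" using W2 M by (simp add: mult_left_mono)
      then show ?thesis by (simp add: algebra_simps)
    qed
    have f3: "L * p * Xm \<le> 2/23 * (L * nx) + 2/23 * (L * b)"
    proof -
      have "L * (p * Xm) \<le> L * (2/23 * (nx + b))" using pXm L by (rule mult_left_mono)
      then show ?thesis by (simp add: algebra_simps)
    qed
    have "0 \<le> L * nx" "0 \<le> L * b" "0 \<le> M * nx\<^sup>2" "0 \<le> M * b\<^sup>2" using L M nx b0 by auto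
    moreover have lin: "\<And>A B C D E F G :: real. A \<le> 25/23*B + 2/23*C \<Longrightarrow> D \<le> 2 * (25/23)\<^sup>2*E + 2 * (2/23)\<^sup>2*F
       \<Longrightarrow> G \<le> 2/23*C + 2/23*B \<Longrightarrow> 0 \<le> C \<Longrightarrow> 0 \<le> B \<Longrightarrow> 0 \<le> F \<Longrightarrow> 0 \<le> E
       \<Longrightarrow> 12/11 * (A / 6 + (D + G) / 24) \<le> 2 * (C + B + F + E)"
      by (simp add: power2_eq_square field_simps)
    ultimately show ?thesis using f1 f2 f3 lin[of "L * W" "L * b" "L * nx" "M * W\<^sup>2" "M * b\<^sup>2" "M * nx\<^sup>2" "L * p * Xm"]
      by simp
  qed
  have eqL: "T * (12/11 * (L * (nv + L * T * (24/23 * (nx + T * nv))) / 6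
          + T * (M * (nv + L * T * (24/23 * (nx + T * nv)))\<^sup>2 + L * L * (24/23 * (nx + T * nv))) / 24))
        = 12/11 * (L * W / 6 + (M * W\<^sup>2 + L * p * Xm) / 24)"
    using T by (simp add: W_def Xm_def p_def b_def field_simps power2_eq_square)
  have eqR: "T * (2 * (L / T * nx + L * nv + M / T * nx\<^sup>2 + M * T * nv\<^sup>2))
        = 2 * (L * nx + L * b + M * nx\<^sup>2 + M * b\<^sup>2)"
    using T by (simp add: b_def field_simps power2_eq_square)
  show ?thesis using key eqL eqR T
    by (metis mult_le_cancel_left_pos)
qed

lemma err_eq:
  fixes N :: nat and h L Vm K0 T :: real assumes TN: "T = real N * h"
  shows "24/23 * (real N * (L * Vm * h ^ 3 / 6) + h * (K0 * h ^ 3 / 12) * (real N)\<^sup>2 / 2) = 24/23 * h\<^sup>2 * (T * L * Vm / 6 + T\<^sup>2 * K0 / 24)"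
  unfolding TN by (simp add: power2_eq_square power3_eq_cube algebra_simps)

lemma shoot_arith:
  fixes a nd err T :: real
  assumes T: "T > 0" and a: "0 \<le> a"
    and key: "T * a \<le> err + nd + (nd + T * a) / 23"
  shows "a \<le> 24/22 * nd / T + 23/22 * err / T"
proof -
  have "T * a \<le> 23/22 * err + 24/22 * nd" using key by (simp add: field_simps)
  then have "a \<le> (23/22 * err + 24/22 * nd) / T" using T by (simp add: field_simps)
  then show ?thesis by (simp add: add_divide_distrib)
qed

theorem lemma6:
  fixes f :: "'a::euclidean_space \<Rightarrow> real"
    and g :: "'a \<Rightarrow> 'a"
    and H :: "'a \<Rightarrow> ('a \<Rightarrow>\<^sub>L 'a)"
    and D3 :: "'a \<Rightarrow> ('a \<Rightarrow>\<^sub>L ('a \<Rightarrow>\<^sub>L 'a))"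
    and L M T h :: real
    and x y :: 'a
    and \<Phi> :: "'a \<Rightarrow> 'a"
  assumes min0: "\<forall>z. f 0 \<le> f z" and f0: "f 0 = 0"
    and grad: "\<forall>z. (f has_derivative (\<lambda>u. g z \<bullet> u)) (at z)"
    and hess: "\<forall>z. (g has_derivative blinfun_apply (H z)) (at z)"
    and third: "\<forall>z. (H has_derivative blinfun_apply (D3 z)) (at z)"
    and D3_cont: "continuous_on UNIV D3"
    and L_bound: "\<forall>z. norm (H z) \<le> L"
    and M_bound: "\<forall>z. norm (D3 z) \<le> M"
    and T_pos: "T > 0" and h_nonneg: "h \<ge> 0"
    and T_div: "h = 0 \<or> (\<exists>N::nat. T = real N * h)"
    and small: "L * (T\<^sup>2 + T * h) \<le> 1 / 12"
    and Phi: "\<forall>v. vv_q g T h x v = ham_q g T y (\<Phi> v)"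
  shows "\<forall>v. norm (\<Phi> v - v) \<le> 3 / (2 * T) * norm (x - y)
            + 2 * h\<^sup>2 * (L / T * norm x + L * norm v + M / T * (norm x)\<^sup>2 + M * T * (norm v)\<^sup>2)"
proof
  fix v
  have g0: "g 0 = 0"
  proof -
    have "(\<lambda>u. g 0 \<bullet> u) = (\<lambda>u. 0)"
      by (rule differential_zero_maxmin[of 0 UNIV f]) (use grad min0 in auto)
    then have "g 0 \<bullet> g 0 = 0" by metis
    then show ?thesis by simp
  qed
  interpret hsys g H D3 L M
    by unfold_locales (use hess third L_bound M_bound g0 in auto)
  have LT2: "L * T\<^sup>2 \<le> 1/12"
  proof -
    have "0 \<le> L * (T * h)" using L_nn T_pos h_nonneg by simp
    then show ?thesis using small by (simp add: algebra_simps)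
  qed
  have T0: "0 \<le> T" using T_pos by simp
  obtain X V where sX: "ham_sol g x v X V" using exists by blast
  obtain X' V' where sX': "ham_sol g y (\<Phi> v) X' V'" using exists by blast
  define Xm where "Xm = 24/23 * (norm x + T * norm v)"
  define Vm where "Vm = norm v + L * T * Xm"
  define K0 where "K0 = M * Vm\<^sup>2 + L * L * Xm"
  define err where "err = 24/23 * h\<^sup>2 * (T * L * Vm / 6 + T\<^sup>2 * K0 / 24)"
  have Xm0: "0 \<le> Xm" using T0 by (simp add: Xm_def)
  have Vm0: "0 \<le> Vm" using Xm0 L_nn T0 by (simp add: Vm_def)
  have K00: "0 \<le> K0" using Xm0 L_nn M_nn by (simp add: K0_def)
  note sb = sol_bounds[OF sX T0 LT2, folded Xm_def, folded Vm_def]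
  have zX': "vv_q g T h x v = X' T" using Phi ham_q_eq[OF sX' T0 LT2] by simp
  have errb: "norm (vv_q g T h x v - X T) \<le> err"
  proof (cases "h = 0")
    case True
    then have "vv_q g T h x v = X T" using ham_q_eq[OF sX T0 LT2] by (simp add: vv_q_def)
    then show ?thesis using True by (simp add: err_def)
  next
    case False
    then have hpos: "h > 0" using h_nonneg by simp
    obtain N :: nat where TN: "T = real N * h" using T_div False by blast
    have rN: "nat (round (T / h)) = N" using hpos by (simp add: TN)
    define p where "p j = (vv_step g h ^^ j) (x, v)" for j
    define xs where "xs j = fst (p j)" for j
    define vs where "vs j = snd (p j)" for j
    have pS: "p (Suc j) = vv_step g h (p j)" for j by (simp add: p_def)
    have xsS: "xs (Suc j) = xs j + h *\<^sub>R vs j - (h\<^sup>2 / 2) *\<^sub>R g (xs j)" for j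
      by (simp add: xs_def vs_def pS vv_step_def Let_def)
    have vsS: "vs (Suc j) = vs j - (h / 2) *\<^sub>R (g (xs j) + g (xs (Suc j)))" for j
      by (simp add: xs_def vs_def pS vv_step_def Let_def)
    have vvq: "vv_q g T h x v = xs N" using False rN by (simp add: vv_q_def xs_def p_def)
    define \<tau> where "\<tau> = L * Vm * h ^ 3 / 6"
    define \<sigma> where "\<sigma> = K0 * h ^ 3 / 12"
    have jh: "real (Suc j) * h = real j * h + h" for j by (simp add: ring_distribs)
    have inT: "t \<in> {0..T}" if j: "j < N" and t: "t \<in> {real j * h..real j * h + h}" for j t
    proof -
      have "real j * h + h = real (Suc j) * h" by (rule jh[symmetric])
      also have "\<dots> \<le> real N * h" using j hpos by (intro mult_right_mono) auto
      finally have "real j * h + h \<le> real N * h" .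
      then have "t \<le> T" using t TN by simp
      moreover have "0 \<le> real j * h" using hpos by simp
      then have "0 \<le> t" using t by (meson atLeastAtMost_iff order_trans)
      ultimately show ?thesis by simp
    qed
    have tau: "norm (X (real (Suc j) * h) - X (real j * h) - h *\<^sub>R V (real j * h) + (h\<^sup>2 / 2) *\<^sub>R g (X (real j * h))) \<le> \<tau>"
      if j: "j < N" for j
      unfolding jh \<tau>_def
      by (rule tau_bound[OF sX h_nonneg]) (use sb(2) inT[OF j] in blast)
    have sig: "norm (V (real (Suc j) * h) - V (real j * h) + (h / 2) *\<^sub>R (g (X (real j * h)) + g (X (real (Suc j) * h)))) \<le> \<sigma>"
      if j: "j < N" for j
      unfolding jh \<sigma>_def K0_def
      by (rule sigma_bound[OF sX h_nonneg]) (use sb inT[OF j] in blast)+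
    have x0: "xs 0 = X (real 0 * h)" and v0: "vs 0 = V (real 0 * h)"
      using sol_D[OF sX] by (simp_all add: xs_def vs_def p_def)
    have smN: "L * (real N * h)\<^sup>2 \<le> 1 / 12" using LT2 TN by simp
    have tau0: "0 \<le> \<tau>" using L_nn Vm0 h_nonneg by (simp add: \<tau>_def)
    have sig0: "0 \<le> \<sigma>" using K00 h_nonneg by (simp add: \<sigma>_def)
    have de: "norm (xs N - X (real N * h)) \<le> 24/23 * (real N * \<tau> + h * \<sigma> * (real N)\<^sup>2 / 2)"
      by (rule discrete_error[of xs h vs N "\<lambda>j. X (real j * h)" "\<lambda>j. V (real j * h)" \<tau> \<sigma>,
            OF xsS vsS tau sig x0 v0 smN h_nonneg tau0 sig0])
    have eqe: "24/23 * (real N * \<tau> + h * \<sigma> * (real N)\<^sup>2 / 2) = err"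
      using err_eq[OF TN, of L Vm K0] by (simp only: \<tau>_def \<sigma>_def err_def)
    have XT: "X (real N * h) = X T" using TN by simp
    show ?thesis using de unfolding eqe XT vvq .
  qed
  have cmp: "norm (X' T - X T - (y - x) - T *\<^sub>R (\<Phi> v - v)) \<le> (norm (y - x) + T * norm (\<Phi> v - v)) / 23"
    by (rule compare(3)[OF sX' sX T0 LT2])
  have key: "T * norm (\<Phi> v - v) \<le> err + norm (x - y) + (norm (x - y) + T * norm (\<Phi> v - v)) / 23"
  proof -
    have eq: "(X' T - X T) - (y - x) - (X' T - X T - (y - x) - T *\<^sub>R (\<Phi> v - v)) = T *\<^sub>R (\<Phi> v - v)"
      by simp
    have "T * norm (\<Phi> v - v) = norm (T *\<^sub>R (\<Phi> v - v))" using T0 by simp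
    also have "\<dots> \<le> norm (X' T - X T) + norm (y - x) + norm (X' T - X T - (y - x) - T *\<^sub>R (\<Phi> v - v))"
      using norm3[of "X' T - X T" "y - x" "X' T - X T - (y - x) - T *\<^sub>R (\<Phi> v - v)"] unfolding eq .
    also have "norm (X' T - X T) \<le> err" using errb zX' by simp
    also have "norm (X' T - X T - (y - x) - T *\<^sub>R (\<Phi> v - v)) \<le> (norm (y - x) + T * norm (\<Phi> v - v)) / 23"
      by (rule cmp)
    finally show ?thesis by (simp add: norm_minus_commute)
  qed
  have a1: "norm (\<Phi> v - v) \<le> 24/22 * norm (x - y) / T + 23/22 * err / T"
    by (rule shoot_arith[OF T_pos norm_ge_zero key])
  have a2: "24/22 * norm (x - y) / T \<le> 3 / (2 * T) * norm (x - y)"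
    using T_pos by (simp add: field_simps)
  have a3: "23/22 * err / T = h\<^sup>2 * (12/11 * (L * Vm / 6 + T * (M * Vm\<^sup>2 + L * L * Xm) / 24))"
  proof -
    have "err = T * (24/23 * h\<^sup>2 * (L * Vm / 6 + T * K0 / 24))"
      unfolding err_def by (simp add: power2_eq_square algebra_simps)
    then have "err / T = 24/23 * h\<^sup>2 * (L * Vm / 6 + T * K0 / 24)" using T_pos by simp
    moreover have "23/22 * err / T = 23/22 * (err / T)" by simp
    ultimately have "23/22 * err / T = 23/22 * (24/23 * h\<^sup>2 * (L * Vm / 6 + T * K0 / 24))" by metis
    also have "\<dots> = h\<^sup>2 * (12/11 * (L * Vm / 6 + T * (M * Vm\<^sup>2 + L * L * Xm) / 24))"
      by (simp add: K0_def algebra_simps)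
    finally show ?thesis .
  qed
  have a4: "12/11 * (L * Vm / 6 + T * (M * Vm\<^sup>2 + L * L * Xm) / 24)
      \<le> 2 * (L / T * norm x + L * norm v + M / T * (norm x)\<^sup>2 + M * T * (norm v)\<^sup>2)"
    unfolding Vm_def Xm_def by (rule final_arith[OF L_nn M_nn T_pos norm_ge_zero norm_ge_zero LT2])
  have a5: "23/22 * err / T \<le> 2 * h\<^sup>2 * (L / T * norm x + L * norm v + M / T * (norm x)\<^sup>2 + M * T * (norm v)\<^sup>2)"
  proof -
    have "h\<^sup>2 * (12/11 * (L * Vm / 6 + T * (M * Vm\<^sup>2 + L * L * Xm) / 24))
        \<le> h\<^sup>2 * (2 * (L / T * norm x + L * norm v + M / T * (norm x)\<^sup>2 + M * T * (norm v)\<^sup>2))"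
      by (rule mult_left_mono[OF a4]) simp
    also have "\<dots> = 2 * h\<^sup>2 * (L / T * norm x + L * norm v + M / T * (norm x)\<^sup>2 + M * T * (norm v)\<^sup>2)"
      by (simp only: mult.assoc mult.left_commute)
    finally show ?thesis unfolding a3 .
  qed
  show "norm (\<Phi> v - v) \<le> 3 / (2 * T) * norm (x - y)
            + 2 * h\<^sup>2 * (L / T * norm x + L * norm v + M / T * (norm x)\<^sup>2 + M * T * (norm v)\<^sup>2)"
    using a1 a2 a5 by linarith
qed

end
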